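(* Let $\mathbb K$ be a naturally ordered positive semiring, $q$ a self-join-free conjunctive query, and $\Sigma$ a set of key constraints with one key per relation of $q$. Let $\mathfrak D$ be a $\mathbb K$-database and $\gamma$ an assignment such that $\mathfrak D',\gamma\models_{\mathbb K} q$ for every repair $\mathfrak D'\in\mathrm{Rep}(\mathfrak D,\Sigma)$, and let $x$ be a variable that is bound in $q$ and unattacked in $q$. Then there is an element $c\in D$ such that $\mathfrak D',\gamma(c/x)\models_{\mathbb K} q[x]$ for every repair $\mathfrak D'$ of $\mathfrak D$.
   Context: Semirings. A commutative semiring $\mathbb K=(K,+,\times,0,1)$ is positive if $a+b=0$ implies $a=b=0$ and it has no zero divisors; naturally ordered if $a\le_{\mathbb K}b:\iff\exists c\,(a+c=b)$ is a total order. Databases. A $\mathbb K$-database $\mathfrak D$ assigns to each relation symbol $R$ a function $R^{\mathfrak D}:\mathrm A^n\to K$ with finite support $\mathrm{Supp}(R^{\mathfrak D})=\{t:R^{\mathfrak D}(t)\neq0\}$; the active domain $D$ is the non-empty set of values occurring in supports. $\mathfrak D'\subseteq\mathfrak D$ means supports are included and values agree on the support of $\mathfrak D'$. An assignment maps variables to $D$; $\gamma(c/x)$ agrees with $\gamma$ except mapping $x$ to $c$. Keys and repairs. Atoms are written $R(\vec y;\vec z)$ with key positions $\vec y$; $\mathfrak D$ satisfies the key of $R$ if two tuples of $\mathrm{Supp}(R^{\mathfrak D})$ that agree on key positions are equal. A repair of $\mathfrak D$ w.r.t. $\Sigma$ is a $\mathbb K$-database $\mathfrak D'\subseteq\mathfrak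 D$ satisfying $\Sigma$ such that no $\mathfrak D''$ with $\mathfrak D'\subsetneq\mathfrak D''\subseteq\mathfrak D$ satisfies $\Sigma$. CQs. $q(\vec x)=\exists\vec y(R_1(\vec z_1)\wedge\dots\wedge R_k(\vec z_k))$ has value $q(\mathfrak D,\alpha)=\sum_{\vec a\in D^{|\vec y|}}\prod_iR_i^{\mathfrak D}(\beta(\vec z_i))$, $\beta=\alpha(\vec a/\vec y)$, and $\mathfrak D,\alpha\models_{\mathbb K}q$ means $q(\mathfrak D,\alpha)\neq 0$. $q[x]$ is $q$ with the quantifier $\exists x$ removed. Attacks. For an atom $R(\vec y;\vec z)$ of $q$, $\Sigma(q\setminus R)$ is the set of functional dependencies $\mathrm{key}(S)\to\mathsf{var}(S)$ for the atoms $S\neq R$ of $q$ (where $\mathrm{key}(S)$ is the set of variables in key positions of $S$), and $\mathsf{var}(\vec y)^+_{\Sigma(q\setminus R)}$ is the set of variables $v$ of $q$ with $\Sigma(q\setminus R)\models\mathsf{var}(\vec y)\to v$. $R(\vec y;\vec z)$ attacks a variable $x$ bound in $q$ if there is a non-empty sequence $x_1,\dots,x_n$ of variables bound in $q$ with $x_1\in\mathsf{var}(\vec z)$, $x_n=x$, consecutive variables co-occurring in some atom of $q$, and no $x_i$ belonging to $\mathsf{var}(\vec y)^+_{\Sigma(q\setminus R)}$. $x$ is unattacked if no atom attacks it. *)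

theory Defs
  imports Main
begin

definition positive_semiring :: "'k::comm_semiring_1 itself \<Rightarrow> bool" where
  "positive_semiring _ \<longleftrightarrow>
     (\<forall>a b :: 'k. a + b = 0 \<longrightarrow> a = 0 \<and> b = 0) \<and>
     (\<forall>a b :: 'k. a * b = 0 \<longrightarrow> a = 0 \<or> b = 0)"

definition nat_le :: "'k::comm_semiring_1 \<Rightarrow> 'k \<Rightarrow> bool" where
  "nat_le a b \<longleftrightarrow> (\<exists>c. a + c = b)"

definition naturally_ordered :: "'k::comm_semiring_1 itself \<Rightarrow> bool" where
  "naturally_ordered _ \<longleftrightarrow>
     (\<forall>a :: 'k. nat_le a a) \<and>
     (\<forall>a b c :: 'k. nat_le a b \<longrightarrow> nat_le b c \<longrightarrow> nat_le a c) \<and>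
     (\<forall>a b :: 'k. nat_le a b \<longrightarrow> nat_le b a \<longrightarrow> a = b) \<and>
     (\<forall>a b :: 'k. nat_le a b \<or> nat_le b a)"

type_synonym ('r, 'a, 'k) db = "'r \<Rightarrow> 'a list \<Rightarrow> 'k"

definition adom :: "('r, 'a, 'k::zero) db \<Rightarrow> 'a set" where
  "adom D = {a. \<exists>R t. D R t \<noteq> 0 \<and> a \<in> set t}"

definition is_db :: "('r \<Rightarrow> nat) \<Rightarrow> ('r, 'a, 'k::zero) db \<Rightarrow> bool" where
  "is_db ar D \<longleftrightarrow> finite {(R, t). D R t \<noteq> 0}
      \<and> (\<forall>R t. D R t \<noteq> 0 \<longrightarrow> length t = ar R)
      \<and> adom D \<noteq> {}"

definition subdb :: "('r, 'a, 'k::zero) db \<Rightarrow> ('r, 'a, 'k) db \<Rightarrow> bool" where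
  "subdb D' D \<longleftrightarrow> (\<forall>R t. D' R t \<noteq> 0 \<longrightarrow> D R t = D' R t)"

text \<open>Key constraints: Sigma R = Some k means that the first k positions of R form its key
  (atoms are written R(y;z) with the key positions first).\<close>
definition sat_keys :: "('r \<Rightarrow> nat option) \<Rightarrow> ('r, 'a, 'k::zero) db \<Rightarrow> bool" where
  "sat_keys \<Sigma> D \<longleftrightarrow> (\<forall>R k t u. \<Sigma> R = Some k \<longrightarrow> D R t \<noteq> 0 \<longrightarrow> D R u \<noteq> 0
      \<longrightarrow> take k t = take k u \<longrightarrow> t = u)"

definition repairs :: "('r \<Rightarrow> nat option) \<Rightarrow> ('r, 'a, 'k::zero) db \<Rightarrow> ('r, 'a, 'k) db set" where
  "repairs \<Sigma> D = {D'. subdb D' D \<and> sat_keys \<Sigma> D' \<and>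
      \<not> (\<exists>D''. subdb D' D'' \<and> D' \<noteq> D'' \<and> subdb D'' D \<and> sat_keys \<Sigma> D'')}"

text \<open>An atom R(y;z) is a triple (R, y, z) of a relation symbol, the variables in key
  positions and the variables in non-key positions. A CQ is given by its set Y of
  existentially quantified variables and its list of atoms.\<close>

type_synonym ('r, 'v) atom = "'r \<times> 'v list \<times> 'v list"

definition atom_vars :: "('r, 'v) atom \<Rightarrow> 'v set" where
  "atom_vars A = set (fst (snd A)) \<union> set (snd (snd A))"

definition atom_key :: "('r, 'v) atom \<Rightarrow> 'v set" where
  "atom_key A = set (fst (snd A))"

definition atom_nonkey :: "('r, 'v) atom \<Rightarrow> 'v set" where
  "atom_nonkey A = set (snd (snd A))"

definition query_vars :: "('r, 'v) atom list \<Rightarrow> 'v set" where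
  "query_vars As = (\<Union>A\<in>set As. atom_vars A)"

definition extensions :: "'v set \<Rightarrow> 'a set \<Rightarrow> ('v \<Rightarrow> 'a) \<Rightarrow> ('v \<Rightarrow> 'a) set" where
  "extensions Y Dom \<alpha> = {\<beta>. (\<forall>v\<in>Y. \<beta> v \<in> Dom) \<and> (\<forall>v. v \<notin> Y \<longrightarrow> \<beta> v = \<alpha> v)}"

definition qval :: "'v set \<Rightarrow> ('r, 'v) atom list \<Rightarrow> ('r, 'a, 'k::comm_semiring_1) db
                    \<Rightarrow> ('v \<Rightarrow> 'a) \<Rightarrow> 'k" where
  "qval Y As D \<alpha> = (\<Sum>\<beta>\<in>extensions Y (adom D) \<alpha>.
       prod_list (map (\<lambda>(R, ys, zs). D R (map \<beta> (ys @ zs))) As))"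

definition models :: "('r, 'a, 'k::comm_semiring_1) db \<Rightarrow> ('v \<Rightarrow> 'a) \<Rightarrow> 'v set
                      \<Rightarrow> ('r, 'v) atom list \<Rightarrow> bool" where
  "models D \<alpha> Y As \<longleftrightarrow> qval Y As D \<alpha> \<noteq> 0"

definition self_join_free :: "('r, 'v) atom list \<Rightarrow> bool" where
  "self_join_free As \<longleftrightarrow> distinct (map fst As)"

definition fd_holds :: "('v \<Rightarrow> nat) set \<Rightarrow> 'v set \<Rightarrow> 'v set \<Rightarrow> bool" where
  "fd_holds r X Z \<longleftrightarrow> (\<forall>t\<in>r. \<forall>u\<in>r. (\<forall>v\<in>X. t v = u v) \<longrightarrow> (\<forall>v\<in>Z. t v = u v))"

definition fd_entails :: "('v set \<times> 'v set) set \<Rightarrow> 'v set \<Rightarrow> 'v set \<Rightarrow> bool" where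
  "fd_entails F X Z \<longleftrightarrow> (\<forall>r. finite r \<longrightarrow> (\<forall>(A, B)\<in>F. fd_holds r A B) \<longrightarrow> fd_holds r X Z)"

definition fds_without :: "('r, 'v) atom list \<Rightarrow> nat \<Rightarrow> ('v set \<times> 'v set) set" where
  "fds_without As i = {(atom_key (As ! j), atom_vars (As ! j)) | j. j < length As \<and> j \<noteq> i}"

definition key_closure :: "('r, 'v) atom list \<Rightarrow> nat \<Rightarrow> 'v set" where
  "key_closure As i = {v \<in> query_vars As. fd_entails (fds_without As i) (atom_key (As ! i)) {v}}"

definition attacks :: "'v set \<Rightarrow> ('r, 'v) atom list \<Rightarrow> nat \<Rightarrow> 'v \<Rightarrow> bool" where
  "attacks Y As i x \<longleftrightarrow> (\<exists>xs. xs \<noteq> [] \<and> set xs \<subseteq> Y \<and> hd xs \<in> atom_nonkey (As ! i)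
      \<and> last xs = x
      \<and> (\<forall>j. Suc j < length xs \<longrightarrow>
             (\<exists>A\<in>set As. xs ! j \<in> atom_vars A \<and> xs ! Suc j \<in> atom_vars A))
      \<and> (\<forall>v\<in>set xs. v \<notin> key_closure As i))"

definition unattacked :: "'v set \<Rightarrow> ('r, 'v) atom list \<Rightarrow> 'v \<Rightarrow> bool" where
  "unattacked Y As x \<longleftrightarrow> (\<forall>i < length As. \<not> attacks Y As i x)"

end

theory Submission
  imports Defs "HOL-Library.FuncSet"
begin

definition atup :: "('v \<Rightarrow> 'a) \<Rightarrow> ('r, 'v) atom \<Rightarrow> 'a list" where
  "atup \<beta> A = map \<beta> (fst (snd A) @ snd (snd A))"

definition emb :: "'v set \<Rightarrow> ('r,'v) atom list \<Rightarrow> ('v \<Rightarrow> 'a) \<Rightarrow> ('r,'a,'k::zero) db \<Rightarrow> ('v \<Rightarrow> 'a) set" where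
  "emb Y As \<gamma> t = {\<beta>. (\<forall>v. v \<notin> Y \<longrightarrow> \<beta> v = \<gamma> v) \<and> (\<forall>A\<in>set As. t (fst A) (atup \<beta> A) \<noteq> 0)}"

lemma atup_cong: "(\<And>v. v \<in> atom_vars A \<Longrightarrow> \<beta> v = \<beta>' v) \<Longrightarrow> atup \<beta> A = atup \<beta>' A"
  by (auto simp: atup_def atom_vars_def)

lemma sum_pos_zero:
  fixes f :: "'b \<Rightarrow> 'k::comm_semiring_1"
  assumes pos: "\<forall>a b::'k. a + b = 0 \<longrightarrow> a = 0 \<and> b = 0" and fin: "finite A"
  shows "sum f A = 0 \<longleftrightarrow> (\<forall>x\<in>A. f x = 0)"
proof -
  have padd: "a + b = 0 \<longleftrightarrow> a = 0 \<and> b = 0" for a b :: 'k using pos[rule_format, of a b] by auto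
  show ?thesis using fin by (induction A rule: finite_induct) (simp_all add: padd)
qed

lemma prod_list_nz:
  fixes xs :: "'k::comm_semiring_1 list"
  assumes nzd: "\<forall>a b::'k. a * b = 0 \<longrightarrow> a = 0 \<or> b = 0"
  shows "prod_list xs \<noteq> 0 \<longleftrightarrow> (\<forall>x\<in>set xs. x \<noteq> 0)"
proof -
  have pm: "a * b = 0 \<longleftrightarrow> a = 0 \<or> b = 0" for a b :: 'k using nzd[rule_format, of a b] by auto
  show ?thesis by (induction xs) (simp_all add: pm)
qed

lemma finite_ext:
  assumes "finite Y" "finite A" shows "finite (extensions Y A \<alpha>)"
proof (rule inj_on_finite[where f="\<lambda>\<beta>. restrict \<beta> Y" and B="Pi\<^sub>E Y (\<lambda>_. A)"])
  show "inj_on (\<lambda>\<beta>. restrict \<beta> Y) (extensions Y A \<alpha>)"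
  proof (rule inj_onI)
    fix b1 b2 assume b: "b1 \<in> extensions Y A \<alpha>" "b2 \<in> extensions Y A \<alpha>" "restrict b1 Y = restrict b2 Y"
    show "b1 = b2"
    proof
      fix v show "b1 v = b2 v"
      proof (cases "v \<in> Y")
        case True then show ?thesis using fun_cong[OF b(3), of v] by simp
      next
        case False then show ?thesis using b(1,2) by (simp add: extensions_def)
      qed
    qed
  qed
  show "(\<lambda>\<beta>. restrict \<beta> Y) ` extensions Y A \<alpha> \<subseteq> Pi\<^sub>E Y (\<lambda>_. A)"
    by (auto simp: extensions_def)
  show "finite (Pi\<^sub>E Y (\<lambda>_. A))" using assms by (simp add: finite_PiE)
qed

lemma models_iff:
  fixes t :: "('r,'a,'k::comm_semiring_1) db"
  assumes pos: "positive_semiring TYPE('k)" and "finite Y" "finite (adom t)"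
  shows "models t \<alpha> Y As \<longleftrightarrow> (\<exists>\<beta>\<in>extensions Y (adom t) \<alpha>. \<forall>A\<in>set As. t (fst A) (atup \<beta> A) \<noteq> 0)"
proof -
  have padd: "\<forall>a b::'k. a + b = 0 \<longrightarrow> a = 0 \<and> b = 0" and pmul: "\<forall>a b::'k. a * b = 0 \<longrightarrow> a = 0 \<or> b = 0"
    using pos unfolding positive_semiring_def by blast+
  have eq: "prod_list (map (\<lambda>(R, ys, zs). t R (map \<beta> (ys @ zs))) As) = prod_list (map (\<lambda>A. t (fst A) (atup \<beta> A)) As)" for \<beta>
    by (rule arg_cong[where f=prod_list], rule map_cong) (auto simp: atup_def split: prod.splits)
  have fin: "finite (extensions Y (adom t) \<alpha>)" using assms(2,3) by (rule finite_ext)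
  have pl: "prod_list (map (\<lambda>A. t (fst A) (atup \<beta> A)) As) \<noteq> 0 \<longleftrightarrow> (\<forall>A\<in>set As. t (fst A) (atup \<beta> A) \<noteq> 0)" for \<beta>
    unfolding prod_list_nz[OF pmul] by simp
  have "models t \<alpha> Y As \<longleftrightarrow> (\<exists>\<beta>\<in>extensions Y (adom t) \<alpha>. prod_list (map (\<lambda>A. t (fst A) (atup \<beta> A)) As) \<noteq> 0)"
    unfolding models_def qval_def eq sum_pos_zero[OF padd fin] by blast
  then show ?thesis unfolding pl .
qed

lemma finite_adom: "finite {(R,t). D R t \<noteq> 0} \<Longrightarrow> finite (adom D)"
proof -
  assume f: "finite {(R,t). D R t \<noteq> 0}"
  have "adom D \<subseteq> (\<Union>p\<in>{(R,t). D R t \<noteq> 0}. set (snd p))" by (auto simp: adom_def)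
  moreover have "finite (\<Union>p\<in>{(R,t). D R t \<noteq> 0}. set (snd p))" using f by auto
  ultimately show ?thesis by (rule finite_subset)
qed

lemma supp_sub: "subdb D' D \<Longrightarrow> {(R,t). D' R t \<noteq> 0} \<subseteq> {(R,t). D R t \<noteq> 0}"
  by (auto simp: subdb_def)

lemma adom_sub: "subdb D' D \<Longrightarrow> adom D' \<subseteq> adom D"
  by (auto simp: subdb_def adom_def) (metis)

lemma repair_char:
  "D' \<in> repairs \<Sigma> D \<longleftrightarrow> subdb D' D \<and> sat_keys \<Sigma> D' \<and>
     (\<forall>R t. D R t \<noteq> 0 \<longrightarrow> D' R t = 0 \<longrightarrow> (\<exists>n u. \<Sigma> R = Some n \<and> D' R u \<noteq> 0 \<and> take n u = take n t \<and> u \<noteq> t))"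
proof
  assume r: "D' \<in> repairs \<Sigma> D"
  hence s: "subdb D' D" "sat_keys \<Sigma> D'" by (auto simp: repairs_def)
  have "D R t \<noteq> 0 \<longrightarrow> D' R t = 0 \<longrightarrow> (\<exists>n u. \<Sigma> R = Some n \<and> D' R u \<noteq> 0 \<and> take n u = take n t \<and> u \<noteq> t)" for R t
  proof (intro impI, rule ccontr)
    assume a: "D R t \<noteq> 0" "D' R t = 0" and nc: "\<not> (\<exists>n u. \<Sigma> R = Some n \<and> D' R u \<noteq> 0 \<and> take n u = take n t \<and> u \<noteq> t)"
    define D'' where "D'' = D'(R := (D' R)(t := D R t))"
    have "subdb D' D''" using a by (auto simp: subdb_def D''_def)
    moreover have "D' \<noteq> D''" using a by (auto simp: D''_def fun_eq_iff)
    moreover have "subdb D'' D" using s(1) by (auto simp: subdb_def D''_def)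
    moreover have "sat_keys \<Sigma> D''"
      using s(2) nc unfolding sat_keys_def D''_def by (auto split: if_splits)
    ultimately show False using r by (auto simp: repairs_def)
  qed
  with s show "subdb D' D \<and> sat_keys \<Sigma> D' \<and> (\<forall>R t. D R t \<noteq> 0 \<longrightarrow> D' R t = 0 \<longrightarrow> (\<exists>n u. \<Sigma> R = Some n \<and> D' R u \<noteq> 0 \<and> take n u = take n t \<and> u \<noteq> t))"
    by blast
next
  assume a: "subdb D' D \<and> sat_keys \<Sigma> D' \<and> (\<forall>R t. D R t \<noteq> 0 \<longrightarrow> D' R t = 0 \<longrightarrow> (\<exists>n u. \<Sigma> R = Some n \<and> D' R u \<noteq> 0 \<and> take n u = take n t \<and> u \<noteq> t))"
  have "\<not> (\<exists>D''. subdb D' D'' \<and> D' \<noteq> D'' \<and> subdb D'' D \<and> sat_keys \<Sigma> D'')"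
  proof
    assume "\<exists>D''. subdb D' D'' \<and> D' \<noteq> D'' \<and> subdb D'' D \<and> sat_keys \<Sigma> D''"
    then obtain D'' where d: "subdb D' D''" "D' \<noteq> D''" "subdb D'' D" "sat_keys \<Sigma> D''" by blast
    then obtain R t where ne: "D' R t \<noteq> D'' R t" by (auto simp: fun_eq_iff)
    have z: "D' R t = 0" using ne d(1) unfolding subdb_def by metis
    hence nz: "D'' R t \<noteq> 0" using ne by auto
    hence "D R t \<noteq> 0" using d(3) by (auto simp: subdb_def)
    then obtain n u where "\<Sigma> R = Some n" "D' R u \<noteq> 0" "take n u = take n t" "u \<noteq> t" using a z by blast
    moreover have "D'' R u \<noteq> 0" using d(1) \<open>D' R u \<noteq> 0\<close> by (auto simp: subdb_def)
    ultimately show False using d(4) nz unfolding sat_keys_def by metis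
  qed
  with a show "D' \<in> repairs \<Sigma> D" by (auto simp: repairs_def)
qed

lemma satD: "sat_keys \<Sigma> D \<Longrightarrow> \<Sigma> R = Some n \<Longrightarrow> D R t \<noteq> 0 \<Longrightarrow> D R u \<noteq> 0 \<Longrightarrow> take n t = take n u \<Longrightarrow> t = u"
  unfolding sat_keys_def by blast

lemma swap_repair:
  assumes r: "r \<in> repairs \<Sigma> D" and s: "s \<in> repairs \<Sigma> D" and sig: "\<Sigma> R = Some n"
  shows "(\<lambda>R' u. if R' = R \<and> take n u = k then r R' u else s R' u) \<in> repairs \<Sigma> D"
proof -
  define s' where "s' = (\<lambda>R' u. if R' = R \<and> take n u = k then r R' u else s R' u)"
  have rc: "subdb r D \<and> sat_keys \<Sigma> r \<and>
    (\<forall>R t. D R t \<noteq> 0 \<longrightarrow> r R t = 0 \<longrightarrow> (\<exists>n u. \<Sigma> R = Some n \<and> r R u \<noteq> 0 \<and> take n u = take n t \<and> u \<noteq> t))"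
    using repair_char[THEN iffD1, OF r] .
  have sc: "subdb s D \<and> sat_keys \<Sigma> s \<and>
    (\<forall>R t. D R t \<noteq> 0 \<longrightarrow> s R t = 0 \<longrightarrow> (\<exists>n u. \<Sigma> R = Some n \<and> s R u \<noteq> 0 \<and> take n u = take n t \<and> u \<noteq> t))"
    using repair_char[THEN iffD1, OF s] .
  have rc1: "\<And>R t. r R t \<noteq> 0 \<Longrightarrow> D R t = r R t" using rc unfolding subdb_def by blast
  have sc1: "\<And>R t. s R t \<noteq> 0 \<Longrightarrow> D R t = s R t" using sc unfolding subdb_def by blast
  have rc2: "sat_keys \<Sigma> r" using rc by blast
  have sc2: "sat_keys \<Sigma> s" using sc by blast
  have rc3: "\<And>R t. D R t \<noteq> 0 \<Longrightarrow> r R t = 0 \<Longrightarrow> (\<exists>n u. \<Sigma> R = Some n \<and> r R u \<noteq> 0 \<and> take n u = take n t \<and> u \<noteq> t)"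
    using rc by blast
  have sc3: "\<And>R t. D R t \<noteq> 0 \<Longrightarrow> s R t = 0 \<Longrightarrow> (\<exists>n u. \<Sigma> R = Some n \<and> s R u \<noteq> 0 \<and> take n u = take n t \<and> u \<noteq> t)"
    using sc by blast
  have in_r: "s' R' u = r R' u" if "R' = R" "take n u = k" for R' u using that by (simp add: s'_def)
  have in_s: "s' R' u = s R' u" if "\<not> (R' = R \<and> take n u = k)" for R' u using that unfolding s'_def by auto
  have 1: "subdb s' D" unfolding subdb_def
  proof (intro allI impI)
    fix R' t assume a: "s' R' t \<noteq> 0"
    show "D R' t = s' R' t"
    proof (cases "R' = R \<and> take n t = k")
      case True
      hence "s' R' t = r R' t" using in_r by blast
      with a rc1[of R' t] show ?thesis by simp
    next
      case False
      hence "s' R' t = s R' t" using in_s by blast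
      with a sc1[of R' t] show ?thesis by simp
    qed
  qed
  have 2: "sat_keys \<Sigma> s'"
    unfolding sat_keys_def
  proof (intro allI impI)
    fix R' m t u assume a: "\<Sigma> R' = Some m" "s' R' t \<noteq> 0" "s' R' u \<noteq> 0" "take m t = take m u"
    show "t = u"
    proof (cases "R' = R")
      case True
      hence mn: "m = n" using a(1) sig by simp
      show ?thesis
      proof (cases "take n t = k")
        case tk: True
        hence tu: "take n u = k" using a(4) mn by simp
        have "r R' t \<noteq> 0" "r R' u \<noteq> 0" using a(2,3) in_r[OF True tk] in_r[OF True tu] by auto
        then show ?thesis using satD[OF rc2 a(1) _ _ a(4)] by blast
      next
        case tk: False
        hence tu: "take n u \<noteq> k" using a(4) mn by simp
        have "s R' t \<noteq> 0" "s R' u \<noteq> 0" using a(2,3) in_s tk tu True by auto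
        then show ?thesis using satD[OF sc2 a(1) _ _ a(4)] by blast
      qed
    next
      case False
      have "s R' t \<noteq> 0" "s R' u \<noteq> 0" using a(2,3) in_s False by auto
      then show ?thesis using satD[OF sc2 a(1) _ _ a(4)] by blast
    qed
  qed
  have 3: "\<forall>R' t. D R' t \<noteq> 0 \<longrightarrow> s' R' t = 0 \<longrightarrow> (\<exists>m u. \<Sigma> R' = Some m \<and> s' R' u \<noteq> 0 \<and> take m u = take m t \<and> u \<noteq> t)"
  proof (intro allI impI)
    fix R' t assume a: "D R' t \<noteq> 0" "s' R' t = 0"
    show "\<exists>m u. \<Sigma> R' = Some m \<and> s' R' u \<noteq> 0 \<and> take m u = take m t \<and> u \<noteq> t"
    proof (cases "R' = R \<and> take n t = k")
      case True
      have "r R' t = 0" using a(2) in_r True by simp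
      then obtain m u where mu: "\<Sigma> R' = Some m" "r R' u \<noteq> 0" "take m u = take m t" "u \<noteq> t"
        using rc3[OF a(1)] by blast
      have "m = n" using mu(1) True sig by simp
      hence "take n u = k" using mu(3) True by simp
      hence "s' R' u \<noteq> 0" using mu(2) in_r True by simp
      then show ?thesis using mu by blast
    next
      case False
      have "s R' t = 0" using a(2) in_s False by simp
      then obtain m u where mu: "\<Sigma> R' = Some m" "s R' u \<noteq> 0" "take m u = take m t" "u \<noteq> t"
        using sc3[OF a(1)] by blast
      have "\<not> (R' = R \<and> take n u = k)"
      proof
        assume c: "R' = R \<and> take n u = k"
        hence "m = n" using mu(1) sig by simp
        thus False using c False mu(3) by simp
      qed
      hence "s' R' u \<noteq> 0" using mu(2) in_s by simp
      then show ?thesis using mu by blast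
    qed
  qed
  have "s' \<in> repairs \<Sigma> D" by (rule repair_char[THEN iffD2], intro conjI 1 2 3)
  thus ?thesis unfolding s'_def .
qed

lemma core:
  fixes As :: "('r,'v) atom list" and s s' r :: "('r,'a,'k::zero) db"
  assumes sjf: "self_join_free As"
    and keys: "\<forall>(R, ys, zs)\<in>set As. \<Sigma> R = Some (length ys)"
    and unatt: "unattacked Y As x" and xY: "x \<in> Y"
    and sk: "sat_keys \<Sigma> s"
    and i: "i < length As" "As ! i = (R, ys, zs)"
    and rho: "\<rho> \<in> emb Y As \<gamma> s"
    and mu: "\<mu> \<in> emb Y As \<gamma> s'"
    and s'def: "\<And>R' u. s' R' u = (if R' = R \<and> take (length ys) u = k then r R' u else s R' u)"
    and notin: "\<mu> \<notin> emb Y As \<gamma> s"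
    and krho: "take (length ys) (atup \<rho> (As ! i)) = k"
  shows "\<exists>\<nu>\<in>emb Y As \<gamma> s. \<nu> x = \<mu> x"
proof -
  have dist: "distinct (map fst As)" using sjf by (simp add: self_join_free_def)
  have idx: "j = i" if "j < length As" "fst (As ! j) = R" for j
  proof -
    have "(map fst As) ! j = (map fst As) ! i" using that i by simp
    then show ?thesis using nth_eq_iff_index_eq[OF dist] that i by (metis length_map)
  qed
  have muv: "\<And>v. v \<notin> Y \<Longrightarrow> \<mu> v = \<gamma> v" and mua: "\<And>A. A \<in> set As \<Longrightarrow> s' (fst A) (atup \<mu> A) \<noteq> 0"
    using mu by (auto simp: emb_def)
  have rhov: "\<And>v. v \<notin> Y \<Longrightarrow> \<rho> v = \<gamma> v" and rhoa: "\<And>A. A \<in> set As \<Longrightarrow> s (fst A) (atup \<rho> A) \<noteq> 0"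
    using rho by (auto simp: emb_def)
  obtain A where A: "A \<in> set As" "s (fst A) (atup \<mu> A) = 0"
    using notin muv by (auto simp: emb_def)
  have "s' (fst A) (atup \<mu> A) \<noteq> 0" using mua A(1) .
  hence blk: "fst A = R" "take (length ys) (atup \<mu> A) = k" using A(2) s'def by (auto split: if_splits)
  obtain j where j: "j < length As" "As ! j = A" using A(1) by (auto simp: in_set_conv_nth)
  have "j = i" using idx j blk by simp
  hence Ai: "A = As ! i" using j by simp
  have "map \<mu> ys = map \<rho> ys"
    using blk(2) krho Ai i(2) by (simp add: atup_def)
  hence keyeq: "\<forall>v\<in>atom_key (As ! i). \<mu> v = \<rho> v" using i(2) by (simp add: atom_key_def map_eq_conv)
  have other: "\<forall>v\<in>atom_vars (As ! j). \<mu> v = \<rho> v"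
    if j: "j < length As" "j \<noteq> i" and kk: "\<forall>v\<in>atom_key (As ! j). \<mu> v = \<rho> v" for j
  proof -
    obtain R2 ys2 zs2 where aj: "As ! j = (R2, ys2, zs2)" by (cases "As ! j") auto
    have mem: "As ! j \<in> set As" using j by simp
    have R2: "R2 \<noteq> R" using idx j aj by force
    have sig: "\<Sigma> R2 = Some (length ys2)" using keys mem aj by auto
    have m1: "s R2 (atup \<mu> (As ! j)) \<noteq> 0" using mua[OF mem] aj R2 s'def by simp
    have m2: "s R2 (atup \<rho> (As ! j)) \<noteq> 0" using rhoa[OF mem] aj by simp
    have "map \<mu> ys2 = map \<rho> ys2" using kk aj by (simp add: atom_key_def map_eq_conv)
    hence "take (length ys2) (atup \<mu> (As ! j)) = take (length ys2) (atup \<rho> (As ! j))"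
      using aj by (simp add: atup_def)
    hence "atup \<mu> (As ! j) = atup \<rho> (As ! j)" using satD[OF sk sig m1 m2] by blast
    thus ?thesis using aj by (auto simp: atup_def atom_vars_def map_eq_conv)
  qed
  have clos: "\<mu> v = \<rho> v" if v: "v \<in> key_closure As i" for v
  proof -
    define t0 :: "'v \<Rightarrow> nat" where "t0 = (\<lambda>_. 0)"
    define t1 :: "'v \<Rightarrow> nat" where "t1 = (\<lambda>w. if \<mu> w = \<rho> w then 0 else 1)"
    have e1: "t0 w = t1 w \<longleftrightarrow> \<mu> w = \<rho> w" "t1 w = t0 w \<longleftrightarrow> \<mu> w = \<rho> w" for w
      by (auto simp: t0_def t1_def)
    have hold: "fd_holds {t0, t1} X Z \<longleftrightarrow> ((\<forall>w\<in>X. \<mu> w = \<rho> w) \<longrightarrow> (\<forall>w\<in>Z. \<mu> w = \<rho> w))" for X Z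
      unfolding fd_holds_def by (simp only: insert_iff empty_iff ball_simps e1 simp_thms) blast
    have "\<forall>(X, Z)\<in>fds_without As i. fd_holds {t0, t1} X Z"
      using other unfolding fds_without_def hold by auto
    moreover have "fd_entails (fds_without As i) (atom_key (As ! i)) {v}"
      using v by (simp add: key_closure_def)
    hence "finite {t0, t1} \<longrightarrow> (\<forall>(X, Z)\<in>fds_without As i. fd_holds {t0, t1} X Z) \<longrightarrow> fd_holds {t0, t1} (atom_key (As ! i)) {v}"
      unfolding fd_entails_def by (rule spec)
    ultimately have "fd_holds {t0, t1} (atom_key (As ! i)) {v}" by simp
    thus ?thesis using keyeq hold by blast
  qed
  show ?thesis
  proof (cases "x \<in> key_closure As i")
    case True
    then show ?thesis using rho clos by auto
  next
    case False
    define P where "P xs \<longleftrightarrow> xs \<noteq> [] \<and> set xs \<subseteq> Y \<and> last xs = x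
      \<and> (\<forall>j. Suc j < length xs \<longrightarrow> (\<exists>A\<in>set As. xs ! j \<in> atom_vars A \<and> xs ! Suc j \<in> atom_vars A))
      \<and> (\<forall>w\<in>set xs. w \<notin> key_closure As i)" for xs
    define Z where "Z = {v. \<exists>xs. P xs \<and> hd xs = v}"
    define \<nu> where "\<nu> v = (if v \<in> Z then \<mu> v else \<rho> v)" for v
    have xZ: "x \<in> Z" unfolding Z_def
      by (intro CollectI exI[of _ "[x]"]) (use xY False in \<open>simp add: P_def\<close>)
    have ZY: "v \<in> Y" "v \<notin> key_closure As i" if vZ: "v \<in> Z" for v
    proof -
      obtain xs where xs: "P xs" "hd xs = v" using vZ by (auto simp: Z_def)
      hence "v \<in> set xs" using hd_in_set[of xs] by (auto simp: P_def)
      thus "v \<in> Y" "v \<notin> key_closure As i" using xs(1) by (auto simp: P_def)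
    qed
    have ext: "v \<in> Z" if "A \<in> set As" "w \<in> Z" "w \<in> atom_vars A" "v \<in> atom_vars A" "v \<in> Y"
      "v \<notin> key_closure As i" for A v w
    proof -
      obtain xs where xs: "P xs" "hd xs = w" using \<open>w \<in> Z\<close> by (auto simp: Z_def)
      have "P (v # xs)" unfolding P_def
      proof (intro conjI allI impI)
        fix j assume "Suc j < length (v # xs)"
        show "\<exists>A\<in>set As. (v # xs) ! j \<in> atom_vars A \<and> (v # xs) ! Suc j \<in> atom_vars A"
        proof (cases j)
          case 0
          have "xs \<noteq> []" using xs(1) by (simp add: P_def)
          hence "xs ! 0 = w" using xs(2) by (simp add: hd_conv_nth)
          then show ?thesis using that(1,3,4) 0 by (intro bexI[of _ A]) auto
        next
          case (Suc j')
          have "Suc j' < length xs" using Suc \<open>Suc j < length (v # xs)\<close> by simp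
          hence "\<exists>A\<in>set As. xs ! j' \<in> atom_vars A \<and> xs ! Suc j' \<in> atom_vars A"
            using xs(1) unfolding P_def by blast
          then show ?thesis using Suc by simp
        qed
      next
        show "v # xs \<noteq> []" by simp
      next
        show "set (v # xs) \<subseteq> Y" using xs(1) that(5) by (simp add: P_def)
      next
        show "last (v # xs) = x" using xs(1) by (simp add: P_def)
      next
        show "\<forall>w\<in>set (v # xs). w \<notin> key_closure As i" using xs(1) that(6) by (simp add: P_def)
      qed
      thus ?thesis by (auto simp: Z_def)
    qed
    have keycl: "atom_key (As ! i) \<subseteq> key_closure As i"
    proof
      fix v assume v: "v \<in> atom_key (As ! i)"
      have "As ! i \<in> set As" using nth_mem[OF i(1)] .
      hence "v \<in> query_vars As" using v by (auto simp: query_vars_def atom_vars_def atom_key_def)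
      moreover have "fd_entails (fds_without As i) (atom_key (As ! i)) {v}"
        using v unfolding fd_entails_def fd_holds_def by blast
      ultimately show "v \<in> key_closure As i" by (simp add: key_closure_def)
    qed
    have Fno: "w \<notin> Z" if "w \<in> atom_vars (As ! i)" for w
    proof
      assume wZ: "w \<in> Z"
      have "w \<notin> atom_key (As ! i)" using keycl ZY(2)[OF wZ] by auto
      hence wn: "w \<in> atom_nonkey (As ! i)" using that by (auto simp: atom_vars_def atom_key_def atom_nonkey_def)
      obtain xs where xs: "P xs" "hd xs = w" using wZ by (auto simp: Z_def)
      have "attacks Y As i x" unfolding attacks_def
        by (intro exI[of _ xs]) (use xs wn in \<open>simp add: P_def\<close>)
      thus False using unatt i by (auto simp: unattacked_def)
    qed
    have "\<nu> \<in> emb Y As \<gamma> s"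
      unfolding emb_def
    proof (intro CollectI conjI allI impI ballI)
      fix v assume "v \<notin> Y" thus "\<nu> v = \<gamma> v" using ZY rhov by (auto simp: \<nu>_def)
    next
      fix A assume A: "A \<in> set As"
      show "s (fst A) (atup \<nu> A) \<noteq> 0"
      proof (cases "atom_vars A \<inter> Z = {}")
        case True
        hence "atup \<nu> A = atup \<rho> A" by (intro atup_cong) (auto simp: \<nu>_def)
        then show ?thesis using rhoa A by simp
      next
        case False
        then obtain w where w: "w \<in> atom_vars A" "w \<in> Z" by auto
        have "\<nu> v = \<mu> v" if "v \<in> atom_vars A" for v
        proof (cases "v \<in> Z")
          case False
          have "\<mu> v = \<rho> v"
          proof (cases "v \<in> Y")
            case True
            then have "v \<in> key_closure As i" using ext[OF A w(2) w(1) that True] False by blast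
            then show ?thesis using clos by blast
          qed (use muv rhov in auto)
          then show ?thesis using False by (simp add: \<nu>_def)
        qed (simp add: \<nu>_def)
        hence eq: "atup \<nu> A = atup \<mu> A" by (intro atup_cong) auto
        obtain j where j: "j < length As" "As ! j = A" using A by (auto simp: in_set_conv_nth)
        have "j \<noteq> i" using Fno w j by auto
        hence "fst A \<noteq> R" using idx j by auto
        then show ?thesis using eq mua[OF A] s'def by simp
      qed
    qed
    moreover have "\<nu> x = \<mu> x" using xZ by (simp add: \<nu>_def)
    ultimately show ?thesis by blast
  qed
qed

theorem lemma4p13:
  fixes Y :: "'v set" and As :: "('r, 'v) atom list"
    and \<Sigma> :: "'r \<Rightarrow> nat option" and ar :: "'r \<Rightarrow> nat"
    and D :: "('r, 'a, 'k::comm_semiring_1) db" and \<gamma> :: "'v \<Rightarrow> 'a" and x :: 'v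
  assumes "positive_semiring TYPE('k)"
    and "naturally_ordered TYPE('k)"
    and "finite Y"
    and "self_join_free As"
    and "\<forall>(R, ys, zs)\<in>set As. length ys + length zs = ar R"
    and "\<forall>(R, ys, zs)\<in>set As. \<Sigma> R = Some (length ys)"
    and "\<forall>R. R \<notin> fst ` set As \<longrightarrow> \<Sigma> R = None"
    and "is_db ar D"
    and "\<forall>v. \<gamma> v \<in> adom D"
    and "\<forall>D'\<in>repairs \<Sigma> D. models D' \<gamma> Y As"
    and "x \<in> Y"
    and "unattacked Y As x"
  shows "\<exists>c\<in>adom D. \<forall>D'\<in>repairs \<Sigma> D. models D' (\<gamma>(x := c)) (Y - {x}) As"
proof -
  note pos = assms(1) and finY = assms(3) and sjf = assms(4) and keys = assms(6)
    and db = assms(8) and cert = assms(10) and xY = assms(11) and unatt = assms(12)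
  have finD: "finite {(R, t). D R t \<noteq> 0}" and adne: "adom D \<noteq> {}"
    using db by (auto simp: is_db_def)
  have repsub: "subdb t D" if "t \<in> repairs \<Sigma> D" for t
    using that by (simp add: repairs_def)
  have finsupp: "finite {(R, u). t R u \<noteq> 0}" if "t \<in> repairs \<Sigma> D" for t
    using finite_subset[OF supp_sub[OF repsub[OF that]] finD] .
  have finad: "finite (adom t)" if "t \<in> repairs \<Sigma> D" for t
    using finite_adom[OF finsupp[OF that]] .
  have finY': "finite (Y - {x})" using finY by simp
  have ex_emb: "\<exists>\<nu>. \<nu> \<in> emb Y As \<gamma> t" if t: "t \<in> repairs \<Sigma> D" for t
  proof -
    have "models t \<gamma> Y As" using cert t by blast
    then obtain \<beta> where "\<beta> \<in> extensions Y (adom t) \<gamma>" "\<forall>A\<in>set As. t (fst A) (atup \<beta> A) \<noteq> 0"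
      using models_iff[OF pos finY finad[OF t]] by blast
    hence "\<beta> \<in> emb Y As \<gamma> t" by (auto simp: emb_def extensions_def)
    thus ?thesis by blast
  qed
  show ?thesis
  proof (cases "x \<in> query_vars As")
    case False
    obtain c where c: "c \<in> adom D" using adne by blast
    have "models D' (\<gamma>(x := c)) (Y - {x}) As" if t: "D' \<in> repairs \<Sigma> D" for D'
    proof -
      have "models D' \<gamma> Y As" using cert t by blast
      then obtain \<beta> where b: "\<beta> \<in> extensions Y (adom D') \<gamma>" "\<forall>A\<in>set As. D' (fst A) (atup \<beta> A) \<noteq> 0"
        using models_iff[OF pos finY finad[OF t]] by blast
      have e: "\<beta>(x := c) \<in> extensions (Y - {x}) (adom D') (\<gamma>(x := c))"
        using b(1) by (auto simp: extensions_def)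
      have at: "atup (\<beta>(x := c)) A = atup \<beta> A" if "A \<in> set As" for A
        using False that by (intro atup_cong) (auto simp: query_vars_def)
      show ?thesis unfolding models_iff[OF pos finY' finad[OF t]]
      proof (rule bexI[OF _ e])
        show "\<forall>A\<in>set As. D' (fst A) (atup (\<beta>(x := c)) A) \<noteq> 0" using b(2) at by simp
      qed
    qed
    then show ?thesis using c by blast
  next
    case True
    then obtain A0 where A0: "A0 \<in> set As" "x \<in> atom_vars A0" by (auto simp: query_vars_def)
    have atom_adom: "\<nu> v \<in> adom t" if "A \<in> set As" "t (fst A) (atup \<nu> A) \<noteq> 0" "v \<in> atom_vars A" for A t \<nu> v
      using that unfolding adom_def atup_def atom_vars_def by force
    define C where "C t = (\<lambda>\<nu>. \<nu> x) ` emb Y As \<gamma> t" for t :: "('r, 'a, 'k) db"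
    have Cad: "C t \<subseteq> adom t" for t
      using A0 atom_adom unfolding C_def emb_def by blast
    have finC: "finite (C t)" if "t \<in> repairs \<Sigma> D" for t
      using finite_subset[OF Cad finad[OF that]] .
    show ?thesis
    proof (cases "repairs \<Sigma> D = {}")
      case True
      then show ?thesis using adne by auto
    next
      case False
      then obtain r0 where r0: "r0 \<in> repairs \<Sigma> D" by blast
      obtain r where r: "r \<in> repairs \<Sigma> D" and rmin: "\<And>t. t \<in> repairs \<Sigma> D \<Longrightarrow> card (C r) \<le> card (C t)"
        using ex_has_least_nat[of "\<lambda>t. t \<in> repairs \<Sigma> D" r0 "\<lambda>t. card (C t)"] r0 by blast
      obtain c where c: "c \<in> C r" using ex_emb[OF r] unfolding C_def by blast
      have good: "c \<in> C s" if s0: "s \<in> repairs \<Sigma> D" for s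
      proof (rule ccontr)
        assume "c \<notin> C s"
        define Dif where "Dif t = {(R, u). r R u \<noteq> t R u}" for t :: "('r, 'a, 'k) db"
        have finDif: "finite (Dif t)" if "t \<in> repairs \<Sigma> D" for t
        proof -
          have "Dif t \<subseteq> {(R, u). r R u \<noteq> 0} \<union> {(R, u). t R u \<noteq> 0}" by (auto simp: Dif_def)
          thus ?thesis using finsupp[OF r] finsupp[OF that] finite_subset by blast
        qed
        obtain s where s: "s \<in> repairs \<Sigma> D" "c \<notin> C s"
          and smin: "\<And>t. t \<in> repairs \<Sigma> D \<Longrightarrow> c \<notin> C t \<Longrightarrow> card (Dif s) \<le> card (Dif t)"
          using ex_has_least_nat[of "\<lambda>t. t \<in> repairs \<Sigma> D \<and> c \<notin> C t" s "\<lambda>t. card (Dif t)"]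
            s0 \<open>c \<notin> C s\<close> by blast
        have skeys: "sat_keys \<Sigma> s" using s(1) by (simp add: repairs_def)
        have sub: "C s \<subseteq> C r"
        proof
          fix d assume "d \<in> C s"
          then obtain \<rho> where rho: "\<rho> \<in> emb Y As \<gamma> s" "d = \<rho> x" by (auto simp: C_def)
          have "\<forall>A\<in>set As. r (fst A) (atup \<rho> A) \<noteq> 0"
          proof (rule ballI, rule ccontr)
            fix A assume A: "A \<in> set As" "\<not> r (fst A) (atup \<rho> A) \<noteq> 0"
            obtain i where i: "i < length As" "As ! i = A" using A(1) by (auto simp: in_set_conv_nth)
            obtain R ys zs where Aeq: "A = (R, ys, zs)" by (cases A) auto
            have sig: "\<Sigma> R = Some (length ys)" using keys A(1) Aeq by auto
            define k where "k = take (length ys) (atup \<rho> A)"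
            define s' where "s' = (\<lambda>R' u. if R' = R \<and> take (length ys) u = k then r R' u else s R' u)"
            have s'rep: "s' \<in> repairs \<Sigma> D" unfolding s'_def by (rule swap_repair[OF r s(1) sig])
            have rz: "r R (atup \<rho> A) = 0" using A(2) Aeq by simp
            have snz: "s R (atup \<rho> A) \<noteq> 0" using rho(1) A(1) Aeq by (auto simp: emb_def)
            have "Dif s' \<subseteq> Dif s" by (auto simp: Dif_def s'_def split: if_splits)
            moreover have "(R, atup \<rho> A) \<in> Dif s" using rz snz by (simp add: Dif_def)
            moreover have "(R, atup \<rho> A) \<notin> Dif s'" by (simp add: Dif_def s'_def k_def)
            ultimately have "Dif s' \<subset> Dif s" by blast
            hence "card (Dif s') < card (Dif s)" using psubset_card_mono finDif[OF s(1)] by blast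
            hence "c \<in> C s'" using smin[OF s'rep] by fastforce
            then obtain \<mu> where mu: "\<mu> \<in> emb Y As \<gamma> s'" "\<mu> x = c" by (auto simp: C_def)
            have notin: "\<mu> \<notin> emb Y As \<gamma> s" using mu(2) s(2) by (auto simp: C_def)
            have iA: "As ! i = (R, ys, zs)" using i(2) Aeq by simp
            have s'd: "\<And>R' u. s' R' u = (if R' = R \<and> take (length ys) u = k then r R' u else s R' u)"
              by (simp add: s'_def)
            have kr: "take (length ys) (atup \<rho> (As ! i)) = k" using i(2) by (simp add: k_def)
            have "\<exists>\<nu>\<in>emb Y As \<gamma> s. \<nu> x = \<mu> x"
              by (rule core[OF sjf keys unatt xY skeys i(1) iA rho(1) mu(1) s'd notin kr])
            then obtain \<nu> where "\<nu> \<in> emb Y As \<gamma> s" "\<nu> x = c" using mu(2) by auto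
            hence "c \<in> C s" unfolding C_def by (metis image_eqI)
            thus False using s(2) by blast
          qed
          hence "\<rho> \<in> emb Y As \<gamma> r" using rho(1) by (auto simp: emb_def)
          thus "d \<in> C r" using rho(2) by (auto simp: C_def)
        qed
        hence "C s \<subset> C r" using c s(2) by blast
        hence "card (C s) < card (C r)" using psubset_card_mono finC[OF r] by blast
        thus False using rmin[OF s(1)] by simp
      qed
      have cD: "c \<in> adom D" using Cad c adom_sub[OF repsub[OF r]] by blast
      have "models D' (\<gamma>(x := c)) (Y - {x}) As" if t: "D' \<in> repairs \<Sigma> D" for D'
      proof -
        obtain \<nu> where nu: "\<nu> \<in> emb Y As \<gamma> D'" "\<nu> x = c" using good[OF t] by (auto simp: C_def)
        have nuA: "\<forall>A\<in>set As. D' (fst A) (atup \<nu> A) \<noteq> 0" using nu(1) by (simp add: emb_def)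
        define \<beta> where "\<beta> v = (if v \<in> Y \<and> v \<notin> query_vars As then \<nu> x else \<nu> v)" for v
        have xad: "\<nu> x \<in> adom D'" using atom_adom[OF A0(1) _ A0(2)] nuA A0(1) by blast
        have e: "\<beta> \<in> extensions (Y - {x}) (adom D') (\<gamma>(x := c))"
          unfolding extensions_def
        proof (intro CollectI conjI ballI allI impI)
          fix v assume v: "v \<in> Y - {x}"
          show "\<beta> v \<in> adom D'"
          proof (cases "v \<in> query_vars As")
            case True
            then obtain A where A: "A \<in> set As" "v \<in> atom_vars A" by (auto simp: query_vars_def)
            have "\<nu> v \<in> adom D'" using atom_adom[OF A(1) _ A(2)] nuA A(1) by blast
            then show ?thesis using True by (simp add: \<beta>_def)
          qed (use v xad in \<open>simp add: \<beta>_def\<close>)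
        next
          fix v assume v: "v \<notin> Y - {x}"
          show "\<beta> v = (\<gamma>(x := c)) v"
          proof (cases "v = x")
            case True then show ?thesis using nu(2) \<open>x \<in> query_vars As\<close> by (simp add: \<beta>_def)
          next
            case False then show ?thesis using v nu(1) by (auto simp: \<beta>_def emb_def)
          qed
        qed
        have at: "atup \<beta> A = atup \<nu> A" if "A \<in> set As" for A
          using that by (intro atup_cong) (auto simp: \<beta>_def query_vars_def)
        show ?thesis unfolding models_iff[OF pos finY' finad[OF t]]
        proof (rule bexI[OF _ e])
          show "\<forall>A\<in>set As. D' (fst A) (atup \<beta> A) \<noteq> 0" using nuA at by simp
        qed
      qed
      then show ?thesis using cD by blast
    qed
  qed
qed

end
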